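(* Let $f:\mathbb{R}^d\to\mathbb{R}$ be $L$-smooth. Let $X\subseteq\mathbb{R}^d$ be a set with $\mathcal{L}(X)=0$ (for example, a finite set of points), and let $W\subseteq\mathbb{R}^d$ be a set with $\mathcal{L}(W)>0$. Run gradient descent $x_t=x_{t-1}-\gamma\nabla f(x_{t-1})$, $t=1,2,\dots$, with learning rate $\gamma\le\frac{1}{2L}$ and $x_0$ drawn uniformly at random from $W$. Then the probability that $x_t\in X$ for some $t$ during training is $0$.
   Context: $\mathcal{L}(S)$ denotes the Lebesgue measure of $S\subseteq\mathbb{R}^d$. A function $f$ is $L$-smooth if it is differentiable and there is a constant $L>0$ with $\|\nabla f(x)-\nabla f(y)\|\le L\|x-y\|$ for all $x,y\in\mathbb{R}^d$. "Random initialization over $W$" means $x_0$ is sampled uniformly from $W$. *)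

theory Defs
  imports "HOL-Analysis.Analysis"
begin

definition L_smooth :: "('a::euclidean_space \<Rightarrow> real) \<Rightarrow> ('a \<Rightarrow> 'a) \<Rightarrow> real \<Rightarrow> bool" where
  "L_smooth f grad L \<longleftrightarrow> L > 0 \<and>
     (\<forall>x. (f has_derivative (\<lambda>h. grad x \<bullet> h)) (at x)) \<and>
     (\<forall>x y. norm (grad x - grad y) \<le> L * norm (x - y))"

definition gd_iter :: "('a::real_vector \<Rightarrow> 'a) \<Rightarrow> real \<Rightarrow> 'a \<Rightarrow> nat \<Rightarrow> 'a" where
  "gd_iter grad \<gamma> x0 t = ((\<lambda>x. x - \<gamma> *\<^sub>R grad x) ^^ t) x0"

end

theory Submission
  imports Defs
begin

lemma gd_lower:
  fixes grad :: "'a::euclidean_space \<Rightarrow> 'a"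
  assumes "L_smooth f grad L" "0 < \<gamma>" "\<gamma> \<le> 1 / (2 * L)"
  shows "norm (x - y) \<le> 2 * norm ((x - \<gamma> *\<^sub>R grad x) - (y - \<gamma> *\<^sub>R grad y))"
proof -
  have L: "L > 0" and lip: "norm (grad x - grad y) \<le> L * norm (x - y)"
    using assms(1) unfolding L_smooth_def by auto
  have gl: "\<gamma> * L \<le> 1/2" using assms(3) L by (simp add: field_simps)
  have "norm (\<gamma> *\<^sub>R (grad x - grad y)) = \<gamma> * norm (grad x - grad y)"
    using assms(2) by simp
  also have "\<dots> \<le> \<gamma> * (L * norm (x - y))" using lip assms(2) by (simp add: mult_left_mono)
  also have "\<dots> \<le> 1/2 * norm (x - y)" using gl
    by (metis mult.assoc mult_right_mono norm_ge_zero)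
  finally have a: "norm (\<gamma> *\<^sub>R (grad x - grad y)) \<le> 1/2 * norm (x - y)" .
  have "(x - \<gamma> *\<^sub>R grad x) - (y - \<gamma> *\<^sub>R grad y) = (x - y) - \<gamma> *\<^sub>R (grad x - grad y)"
    by (simp add: algebra_simps)
  moreover have "norm (x - y) - norm (\<gamma> *\<^sub>R (grad x - grad y)) \<le> norm ((x - y) - \<gamma> *\<^sub>R (grad x - grad y))"
    by (rule norm_triangle_ineq2)
  ultimately have "norm (x - y) - norm (\<gamma> *\<^sub>R (grad x - grad y)) \<le> norm ((x - \<gamma> *\<^sub>R grad x) - (y - \<gamma> *\<^sub>R grad y))"
    by metis
  then show ?thesis using a by linarith
qed

theorem corollary1:
  fixes f :: "'a::euclidean_space \<Rightarrow> real" and grad :: "'a \<Rightarrow> 'a"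
    and L \<gamma> :: real and X W :: "'a set"
  assumes "L_smooth f grad L"
    and "X \<in> null_sets lebesgue"
    and "W \<in> sets lebesgue" and "0 < emeasure lebesgue W" and "emeasure lebesgue W < \<infinity>"
    and "0 < \<gamma>" and "\<gamma> \<le> 1 / (2 * L)"
  shows "AE x0 in uniform_measure lebesgue W. \<forall>t. gd_iter grad \<gamma> x0 t \<notin> X"
proof -
  define g where "g = (\<lambda>x::'a. x - \<gamma> *\<^sub>R grad x)"
  have low: "norm (x - y) \<le> 2 * norm (g x - g y)" for x y
    unfolding g_def using gd_lower[OF assms(1,6,7)] by blast
  have inj: "inj g"
  proof (rule injI)
    fix x y assume "g x = g y" then show "x = y" using low[of x y] by simp
  qed
  have vim: "negligible (g -` N)" if N: "negligible N" for N
  proof -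
    have eq: "g -` N = inv g ` (N \<inter> range g)"
    proof
      show "g -` N \<subseteq> inv g ` (N \<inter> range g)"
      proof
        fix x assume "x \<in> g -` N"
        then have "g x \<in> N \<inter> range g" by simp
        moreover have "inv g (g x) = x" using inj by (simp add: inv_f_f)
        ultimately show "x \<in> inv g ` (N \<inter> range g)" by (metis image_eqI)
      qed
      show "inv g ` (N \<inter> range g) \<subseteq> g -` N"
      proof
        fix z assume "z \<in> inv g ` (N \<inter> range g)"
        then obtain x where x: "g x \<in> N" "z = inv g (g x)" by blast
        then show "z \<in> g -` N" using inj by (simp add: inv_f_f)
      qed
    qed
    have "negligible (inv g ` (N \<inter> range g))"
    proof (rule negligible_locally_Lipschitz_image)
      show "negligible (N \<inter> range g)" using N negligible_subset by blast
      fix u assume "u \<in> N \<inter> range g"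
      then obtain x where u: "u = g x" by auto
      show "\<exists>T B. open T \<and> u \<in> T \<and> (\<forall>v\<in>(N \<inter> range g) \<inter> T. norm (inv g v - inv g u) \<le> B * norm (v - u))"
      proof (intro exI[of _ UNIV] exI[of _ 2] conjI ballI)
        fix v assume "v \<in> (N \<inter> range g) \<inter> UNIV"
        then obtain y where v: "v = g y" by auto
        show "norm (inv g v - inv g u) \<le> 2 * norm (v - u)"
          using low[of y x] inj by (simp add: u v inv_f_f)
      qed auto
    qed auto
    then show ?thesis using eq by simp
  qed
  have it: "negligible ((g ^^ t) -` X)" for t
  proof (induction t)
    case 0
    then show ?case using assms(2) by (simp add: negligible_iff_null_sets)
  next
    case (Suc t)
    have "(g ^^ Suc t) -` X = g -` ((g ^^ t) -` X)"
      by (simp only: funpow_Suc_right vimage_comp)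
    then show ?case using vim[OF Suc] by (simp only:)
  qed
  have "negligible (\<Union>t. (g ^^ t) -` X)"
    by (rule negligible_countable_Union) (auto intro: it)
  then have nul: "(\<Union>t. (g ^^ t) -` X) \<in> null_sets lebesgue"
    by (simp add: negligible_iff_null_sets)
  show ?thesis
  proof (rule AE_uniform_measureI[OF assms(3)])
    show "AE x in lebesgue. x \<in> W \<longrightarrow> (\<forall>t. gd_iter grad \<gamma> x t \<notin> X)"
      by (rule AE_I'[OF nul]) (auto simp: gd_iter_def g_def)
  qed
qed

end
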